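(* Let $\mathbb{K}\in\{\mathbb{R},\mathbb{C}\}$ and let $X$ be an infinite-dimensional normed vector space over $\mathbb{K}$. Suppose $o(X)=|X|=\dim X$. Then there exists a (Hamel) basis of $X$ which is a connected and locally connected subset of the unit sphere $\{x\in X:\ \|x\|=1\}$.
   Context: $|S|$ denotes the cardinality of a set $S$. $\dim X$ denotes the algebraic (Hamel) dimension of $X$, i.e. the cardinality of an algebraic basis of $X$ over $\mathbb{K}$. $o(X)$ denotes the cardinality of the family of all open subsets of $X$ (with respect to the norm topology). A basis always means an algebraic (Hamel) basis; connectedness and local connectedness refer to the subspace topology induced by the norm. *)

theory Defs
  imports "HOL-Analysis.Analysis" "HOL-Library.Equipollence"
begin

text \<open>Together with the norm of
  the real normed space this makes the type a complex normed space.\<close>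
definition complex_normed_scaling :: "(complex \<Rightarrow> 'a::real_normed_vector \<Rightarrow> 'a) \<Rightarrow> bool" where
  "complex_normed_scaling scl \<longleftrightarrow>
     vector_space scl \<and>
     (\<forall>r x. scl (complex_of_real r) x = scaleR r x) \<and>
     (\<forall>c x. norm (scl c x) = cmod c * norm x)"

definition hamel_basis :: "('k::field \<Rightarrow> 'a::ab_group_add \<Rightarrow> 'a) \<Rightarrow> 'a set \<Rightarrow> bool" where
  "hamel_basis scl B \<longleftrightarrow>
     \<not> module.dependent scl B \<and> module.span scl B = UNIV"

definition infinite_dimensional :: "('k::field \<Rightarrow> 'a::ab_group_add \<Rightarrow> 'a) \<Rightarrow> bool" where
  "infinite_dimensional scl \<longleftrightarrow>
     \<not> (\<exists>S. finite S \<and> module.span scl S = (UNIV :: 'a set))"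

end

theory Submission
  imports Defs
begin

unbundle cardinal_syntax

lemma lepoll_iff_ordLeq: "A \<lesssim> B \<longleftrightarrow> |A| \<le>o |B|"
  by (simp add: lepoll_def card_of_ordLeq[symmetric])

lemma times_self_lepoll: "infinite T \<Longrightarrow> T \<times> T \<lesssim> T"
  unfolding lepoll_iff_ordLeq
  using card_of_Times_same_infinite ordIso_iff_ordLeq by blast

lemma lists_lepoll_infinite:
  assumes inf: "infinite T" shows "lists T \<lesssim> T"
proof -
  define L where "L n = {l. set l \<subseteq> T \<and> length l = n}" for n
  have Ln: "L n \<lesssim> T" for n
  proof (induction n)
    case 0
    have "L 0 = {[]}" by (auto simp: L_def)
    moreover obtain t where "t \<in> T" using inf by (metis ex_in_conv infinite_imp_nonempty)
    ultimately show ?case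
      by (metis insert_absorb singleton_lepoll)
  next
    case (Suc n)
    have "L (Suc n) \<subseteq> (\<lambda>(x,l). x # l) ` (T \<times> L n)"
    proof
      fix l assume "l \<in> L (Suc n)"
      then obtain x l' where "l = x # l'" "x \<in> T" "l' \<in> L n"
        by (cases l) (auto simp: L_def)
      then show "l \<in> (\<lambda>(x,l). x # l) ` (T \<times> L n)" by force
    qed
    then have "L (Suc n) \<lesssim> T \<times> L n" by (rule subset_image_lepoll)
    also have "\<dots> \<lesssim> T \<times> T" using Suc.IH by (simp add: times_lepoll_mono)
    also have "\<dots> \<lesssim> T" using inf by (rule times_self_lepoll)
    finally show ?case .
  qed
  have "lists T = (\<Union>n\<in>(UNIV::nat set). L n)" by (auto simp: L_def)
  moreover have "|\<Union>n\<in>(UNIV::nat set). L n| \<le>o |T|"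
    apply (rule card_of_UNION_ordLeq_infinite[OF inf])
    using inf infinite_le_lepoll lepoll_iff_ordLeq Ln by blast+
  ultimately show ?thesis by (simp add: lepoll_iff_ordLeq)
qed



unbundle cardinal_syntax

locale nvs = vector_space scale for scale :: "'k::real_field \<Rightarrow> 'a::real_normed_vector \<Rightarrow> 'a" +
  assumes scale_of_real: "scale (of_real r) x = r *\<^sub>R x"
begin

lemma span_scaleR: "x \<in> span T \<Longrightarrow> r *\<^sub>R x \<in> span T"
  by (metis scale_of_real span_scale)

lemma infinite_UNIV_a:
  assumes inf: "infinite_dimensional scale" shows "infinite (UNIV::'a set)"
proof
  assume "finite (UNIV::'a set)"
  moreover have "span (UNIV::'a set) = UNIV" using span_superset by blast
  ultimately show False using inf unfolding infinite_dimensional_def by blast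
qed

lemma lesspoll_insert:
  assumes "infinite (UNIV::'a set)" "T \<prec> (UNIV::'a set)" shows "insert x T \<prec> (UNIV::'a set)"
proof (cases "finite T")
  case True then show ?thesis by (intro finite_lesspoll_infinite assms(1)) simp
next
  case False then show ?thesis by (rule eq_lesspoll_trans[OF infinite_insert_eqpoll assms(2)])
qed
lemma span_small:
  assumes inf: "infinite_dimensional scale" and B0: "independent B0" "B0 \<approx> (UNIV::'a set)"
    and T: "T \<prec> (UNIV::'a set)"
  shows "span T \<noteq> UNIV"
proof
  assume sp: "span T = UNIV"
  show False
  proof (cases "finite T")
    case True
    then show False using inf sp unfolding infinite_dimensional_def by simp
  next
    case False
    have cover: "B0 \<subseteq> (\<Union>l\<in>lists T. B0 \<inter> span (set l))"
    proof
      fix b assume b: "b \<in> B0"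
      have "b \<in> span T" using sp by simp
      then obtain t r where t: "finite t" "t \<subseteq> T" "b = (\<Sum>a\<in>t. scale (r a) a)"
        unfolding span_explicit by blast
      obtain l where l: "set l = t" using t(1) finite_list by blast
      have "b \<in> span (set l)" unfolding t(3) l
        by (intro span_sum span_scale span_base)
      moreover have "l \<in> lists T" using l t(2) by auto
      ultimately show "b \<in> (\<Union>l\<in>lists T. B0 \<inter> span (set l))" using b by blast
    qed
    have fin: "finite (B0 \<inter> span (set l))" for l
    proof -
      have "independent (B0 \<inter> span (set l))" by (rule independent_mono[OF B0(1)]) simp
      then show ?thesis using independent_span_bound[of "set l" "B0 \<inter> span (set l)"] by simp
    qed
    have "|\<Union>l\<in>lists T. B0 \<inter> span (set l)| \<le>o |T|"
    proof (rule card_of_UNION_ordLeq_infinite[OF False])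
      show "|lists T| \<le>o |T|" using lists_lepoll_infinite[OF False] by (simp only: lepoll_iff_ordLeq)
      show "\<forall>l\<in>lists T. |B0 \<inter> span (set l)| \<le>o |T|"
      proof
        fix l show "|B0 \<inter> span (set l)| \<le>o |T|"
          using finite_lepoll_infinite[OF False fin[of l]] by (simp only: lepoll_iff_ordLeq)
      qed
    qed
    then have "(\<Union>l\<in>lists T. B0 \<inter> span (set l)) \<lesssim> T"
      by (simp only: lepoll_iff_ordLeq)
    then have "B0 \<lesssim> T"
      by (rule lepoll_trans[OF subset_imp_lepoll[OF cover]])
    then have "(UNIV::'a set) \<lesssim> T"
      by (rule lepoll_trans1[OF eqpoll_sym[OF B0(2)]])
    then have "(UNIV::'a set) \<prec> (UNIV::'a set)" using T by (rule lesspoll_trans1)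
    then show False by simp
  qed
qed
end



lemma norm_est:
  fixes a p :: "'a::real_normed_vector"
  assumes a: "norm a = 1" and p: "p \<noteq> 0"
  shows "norm (p /\<^sub>R norm p - a) \<le> 2 * norm (p - a)"
proof -
  have e1: "p /\<^sub>R norm p - p = (inverse (norm p) - 1) *\<^sub>R p"
    by (simp add: algebra_simps)
  have "norm (p /\<^sub>R norm p - p) = \<bar>inverse (norm p) - 1\<bar> * norm p"
    unfolding e1 by simp
  also have "\<dots> = \<bar>1 - norm p\<bar>"
  proof -
    have "norm p * (inverse (norm p) - 1) = 1 - norm p" using p by (simp add: algebra_simps)
    then have "\<bar>norm p * (inverse (norm p) - 1)\<bar> = \<bar>1 - norm p\<bar>" by simp
    then show ?thesis by (simp add: abs_mult mult.commute)
  qed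
  also have "\<dots> = \<bar>norm a - norm p\<bar>" using a by simp
  also have "\<dots> \<le> norm (a - p)" by (rule norm_triangle_ineq3)
  also have "\<dots> = norm (p - a)" by (simp add: norm_minus_commute)
  finally have h: "norm (p /\<^sub>R norm p - p) \<le> norm (p - a)" .
  have "norm (p /\<^sub>R norm p - a) = norm ((p /\<^sub>R norm p - p) + (p - a))" by simp
  also have "\<dots> \<le> norm (p /\<^sub>R norm p - p) + norm (p - a)" by (rule norm_triangle_ineq)
  finally show ?thesis using h by simp
qed

lemma seg_conn:
  fixes p q :: "'a::real_normed_vector"
  assumes "0 \<notin> closed_segment p q"
  shows "connected ((\<lambda>x. x /\<^sub>R norm x) ` closed_segment p q)"
proof (rule connected_continuous_image)
  show "connected (closed_segment p q)" by simp
  show "continuous_on (closed_segment p q) (\<lambda>x. x /\<^sub>R norm x)"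
    using assms by (auto intro!: continuous_intros)
qed

lemma norm_normalize: "(p::'a::real_normed_vector) \<noteq> 0 \<Longrightarrow> norm (p /\<^sub>R norm p) = 1"
  by simp




locale nvs_big = nvs scale for scale :: "'k::real_field \<Rightarrow> 'a::real_normed_vector \<Rightarrow> 'a" +
  fixes B0 :: "'a set"
  assumes inf: "infinite_dimensional scale"
    and B0i: "independent B0" and B0c: "B0 \<approx> (UNIV::'a set)"
begin

lemma infU: "infinite (UNIV::'a set)" by (rule infinite_UNIV_a[OF inf])

lemma avoid: "T \<prec> (UNIV::'a set) \<Longrightarrow> \<exists>w. w \<notin> span T"
  using span_small[OF inf B0i B0c] by blast

lemma small_insert: "T \<prec> (UNIV::'a set) \<Longrightarrow> insert x T \<prec> (UNIV::'a set)"
  by (rule lesspoll_insert[OF infU])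

lemma normalize_notin:
  assumes "p /\<^sub>R norm p \<notin> span T" shows "p \<notin> span T"
  using assms span_scaleR by blast

lemma normalize_notin2:
  assumes "p \<notin> span T" shows "p /\<^sub>R norm p \<notin> span T"
proof
  assume "p /\<^sub>R norm p \<in> span T"
  then have "norm p *\<^sub>R (p /\<^sub>R norm p) \<in> span T" by (rule span_scaleR)
  moreover have "p \<noteq> 0" using assms span_zero by auto
  ultimately show False using assms by simp
qed

lemma density:
  assumes a: "norm a = 1" and e: "e > 0" and T: "T \<prec> (UNIV::'a set)"
  shows "\<exists>z. norm z = 1 \<and> z \<notin> span T \<and> dist z a < e"
proof (cases "a \<in> span T")
  case False then show ?thesis using a e by (intro exI[of _ a]) simp
next
  case True
  obtain w where w: "w \<notin> span T" using avoid[OF T] by blast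
  have w0: "w \<noteq> 0" using w span_zero by auto
  define t where "t = e / (4 * norm w)"
  have t: "t > 0" using e w0 by (simp add: t_def)
  define p where "p = a + t *\<^sub>R w"
  have pn: "p \<notin> span T"
  proof
    assume "p \<in> span T"
    then have "p - a \<in> span T" using True span_diff by blast
    then have "inverse t *\<^sub>R (p - a) \<in> span T" by (rule span_scaleR)
    then show False using w t by (simp add: p_def)
  qed
  have p0: "p \<noteq> 0" using pn span_zero by auto
  have "norm (p - a) = e / 4" using t w0 e by (simp add: p_def t_def)
  then have "norm (p /\<^sub>R norm p - a) \<le> e / 2" using norm_est[OF a p0] by simp
  then show ?thesis using p0 e normalize_notin2[OF pn]
    by (intro exI[of _ "p /\<^sub>R norm p"]) (simp add: dist_norm)
qed

lemma seg_piece: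
  assumes a: "norm a = 1" and sub: "ball a r \<subseteq> W" and d: "d \<le> 1/2" "2*d \<le> r"
    and seg: "\<And>p. p \<in> closed_segment q m \<Longrightarrow> dist a p < d \<and> p \<notin> span T"
  shows "connected ((\<lambda>x. x /\<^sub>R norm x) ` closed_segment q m) \<and>
         (\<lambda>x. x /\<^sub>R norm x) ` closed_segment q m \<subseteq> W \<inter> sphere 0 1 - span T"
proof
  have "0 \<notin> closed_segment q m"
  proof
    assume "0 \<in> closed_segment q m"
    then have "dist a 0 < d" using seg by blast
    then show False using a d by simp
  qed
  then show "connected ((\<lambda>x. x /\<^sub>R norm x) ` closed_segment q m)" by (rule seg_conn)
  show "(\<lambda>x. x /\<^sub>R norm x) ` closed_segment q m \<subseteq> W \<inter> sphere 0 1 - span T"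
  proof
    fix x assume "x \<in> (\<lambda>x. x /\<^sub>R norm x) ` closed_segment q m"
    then obtain p where p: "p \<in> closed_segment q m" "x = p /\<^sub>R norm p" by blast
    have pa: "dist a p < d" and ps: "p \<notin> span T" using seg[OF p(1)] by auto
    have p0: "p \<noteq> 0" using ps span_zero by auto
    have "norm (p /\<^sub>R norm p - a) \<le> 2 * norm (p - a)" by (rule norm_est[OF a p0])
    also have "\<dots> < 2 * d" using pa by (simp add: dist_norm norm_minus_commute)
    finally have "dist a x < r" using d p(2) by (simp add: dist_norm norm_minus_commute)
    then have "x \<in> W" using sub by auto
    moreover have "norm x = 1" using p0 p(2) by simp
    moreover have "x \<notin> span T" using normalize_notin2[OF ps] p(2) by simp
    ultimately show "x \<in> W \<inter> sphere 0 1 - span T" by simp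
  qed
qed

lemma local_conn:
  assumes a: "norm a = 1" and W: "open W" "a \<in> W" and T: "T \<prec> (UNIV::'a set)"
  shows "\<exists>\<delta>>0. \<forall>y z. norm y = 1 \<longrightarrow> norm z = 1 \<longrightarrow> dist y a < \<delta> \<longrightarrow> dist z a < \<delta>
            \<longrightarrow> y \<notin> span T \<longrightarrow> z \<notin> span T \<longrightarrow> connected_component (W \<inter> sphere 0 1 - span T) y z"
proof -
  obtain r where r: "r > 0" "ball a r \<subseteq> W" using W open_contains_ball by blast
  define \<delta> where "\<delta> = min (r/4) (1/4)"
  have \<delta>: "\<delta> > 0" "\<delta> \<le> r/4" "\<delta> \<le> 1/4" using r by (auto simp: \<delta>_def)
  show ?thesis
  proof (intro exI[of _ \<delta>] conjI allI impI \<delta>(1))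
    fix y z assume y1: "norm y = 1" and z1: "norm z = 1" and ya: "dist y a < \<delta>" and za: "dist z a < \<delta>"
      and yT: "y \<notin> span T" and zT: "z \<notin> span T"
    define T' where "T' = insert y (insert z T)"
    have T': "T' \<prec> (UNIV::'a set)" unfolding T'_def by (intro small_insert T)
    obtain w where w: "w \<notin> span T'" using avoid[OF T'] by blast
    have w0: "w \<noteq> 0" using w span_zero by auto
    define t where "t = \<delta> / (2 * norm w)"
    have t: "t > 0" using \<delta> w0 by (simp add: t_def)
    have tw: "norm (t *\<^sub>R w) = \<delta> / 2" using t w0 \<delta> by (simp add: t_def)
    define m where "m = (1/2) *\<^sub>R (y + z) + t *\<^sub>R w"
    have "m - a = (1/2) *\<^sub>R (y - a) + (1/2) *\<^sub>R (z - a) + t *\<^sub>R w"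
      by (simp add: m_def algebra_simps flip: scaleR_add_left)
    then have "norm (m - a) \<le> norm ((1/2) *\<^sub>R (y - a)) + norm ((1/2) *\<^sub>R (z - a)) + norm (t *\<^sub>R w)"
      by (metis norm_triangle_le order_refl add_mono)
    also have "\<dots> < 2 * \<delta>" using ya za tw \<delta>(1) by (simp add: dist_norm)
    finally have ma: "m \<in> ball a (2*\<delta>)" by (simp add: dist_norm norm_minus_commute)
    have piece: "connected ((\<lambda>x. x /\<^sub>R norm x) ` closed_segment q m) \<and>
         (\<lambda>x. x /\<^sub>R norm x) ` closed_segment q m \<subseteq> W \<inter> sphere 0 1 - span T"
      if q: "q \<in> {y, z}" for q
    proof (rule seg_piece[OF a r(2)])
      show "2 * \<delta> \<le> 1/2" "2 * (2 * \<delta>) \<le> r" using \<delta> by auto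
      have qa: "q \<in> ball a (2*\<delta>)" using q ya za \<delta> by (auto simp: dist_commute)
      have qT: "q \<notin> span T" using q yT zT by auto
      have qT': "q \<in> span T'" using q by (auto simp: T'_def intro: span_base)
      fix p assume p: "p \<in> closed_segment q m"
      have "p \<in> ball a (2*\<delta>)"
        using closed_segment_subset[OF qa ma convex_ball] p by blast
      then have "dist a p < 2 * \<delta>" by simp
      moreover have "p \<notin> span T"
      proof
        assume pT: "p \<in> span T"
        obtain u where u: "0 \<le> u" "u \<le> 1" "p = (1 - u) *\<^sub>R q + u *\<^sub>R m"
          using p unfolding closed_segment_def by blast
        show False
        proof (cases "u = 0")
          case True then show False using u qT pT by simp
        next
          case False
          have eq: "(u * t) *\<^sub>R w = p - (1 - u) *\<^sub>R q - (u/2) *\<^sub>R y - (u/2) *\<^sub>R z"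
            by (simp add: u(3) m_def algebra_simps)
          have "p \<in> span T'" using pT span_mono[of T T'] by (auto simp: T'_def)
          moreover have "y \<in> span T'" "z \<in> span T'" by (auto simp: T'_def intro: span_base)
          ultimately have "p - (1 - u) *\<^sub>R q - (u/2) *\<^sub>R y - (u/2) *\<^sub>R z \<in> span T'"
            using qT' by (intro span_diff span_scaleR) auto
          then have "(u * t) *\<^sub>R w \<in> span T'" by (simp only: eq)
          then have "inverse (u * t) *\<^sub>R ((u * t) *\<^sub>R w) \<in> span T'" by (rule span_scaleR)
          moreover have "inverse (u * t) *\<^sub>R ((u * t) *\<^sub>R w) = w" using False t by (simp add: field_simps)
          ultimately show False using w by simp
        qed
      qed
      ultimately show "dist a p < 2 * \<delta> \<and> p \<notin> span T" by simp
    qed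
    let ?N = "\<lambda>x::'a. x /\<^sub>R norm x"
    have cy: "connected (?N ` closed_segment y m)" "?N ` closed_segment y m \<subseteq> W \<inter> sphere 0 1 - span T"
      using piece[of y] by auto
    have cz: "connected (?N ` closed_segment z m)" "?N ` closed_segment z m \<subseteq> W \<inter> sphere 0 1 - span T"
      using piece[of z] by auto
    have my: "?N m \<in> ?N ` closed_segment y m" and mz: "?N m \<in> ?N ` closed_segment z m" by auto
    have yy: "y \<in> ?N ` closed_segment y m"
      using y1 by (intro image_eqI[of _ _ y]) auto
    have zz: "z \<in> ?N ` closed_segment z m"
      using z1 by (intro image_eqI[of _ _ z]) auto
    show "connected_component (W \<inter> sphere 0 1 - span T) y z"
    proof (rule connected_componentI[of "?N ` closed_segment y m \<union> ?N ` closed_segment z m"])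
      show "connected (?N ` closed_segment y m \<union> ?N ` closed_segment z m)"
        using cy(1) cz(1) my mz by (intro connected_Un) auto
    qed (use cy cz yy zz in auto)
  qed
qed

end



context nvs_big begin

lemma sphere_connected: "connected (sphere (0::'a) 1)"
  unfolding connected_iff_connected_component
proof (intro ballI)
  fix x y :: 'a assume x: "x \<in> sphere 0 1" and y: "y \<in> sphere 0 1"
  have T: "{x, y} \<prec> (UNIV::'a set)" by (rule finite_lesspoll_infinite[OF infU]) simp
  obtain w where w: "w \<notin> span {x, y}" using avoid[OF T] by blast
  let ?N = "\<lambda>x::'a. x /\<^sub>R norm x"
  have avoid0: "0 \<notin> closed_segment q w" if q: "q \<in> {x, y}" for q
  proof
    assume "0 \<in> closed_segment q w"
    then obtain u where u: "0 \<le> u" "u \<le> 1" "0 = (1 - u) *\<^sub>R q + u *\<^sub>R w"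
      unfolding closed_segment_def by blast
    have q0: "q \<noteq> 0" using q x y by auto
    show False
    proof (cases "u = 0")
      case True then show False using u q0 by simp
    next
      case False
      have "u *\<^sub>R w = - ((1 - u) *\<^sub>R q)" using u(3) by (simp add: eq_neg_iff_add_eq_0 add.commute)
      then have "w = inverse u *\<^sub>R (- ((1 - u) *\<^sub>R q))" using False
        by (metis scaleR_scaleR left_inverse scaleR_one)
      moreover have "inverse u *\<^sub>R (- ((1 - u) *\<^sub>R q)) \<in> span {x, y}"
        using q by (intro span_scaleR span_neg span_base) auto
      ultimately show False using w by simp
    qed
  qed
  have sub: "?N ` closed_segment q w \<subseteq> sphere 0 1" if "q \<in> {x, y}" for q
    using avoid0[OF that] by (auto simp: norm_normalize) (metis norm_eq_zero left_inverse)
  have cq: "connected (?N ` closed_segment q w)" if "q \<in> {x, y}" for q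
    by (rule seg_conn[OF avoid0[OF that]])
  have xx: "x \<in> ?N ` closed_segment x w" using x by (intro image_eqI[of _ _ x]) auto
  have yy: "y \<in> ?N ` closed_segment y w" using y by (intro image_eqI[of _ _ y]) auto
  show "connected_component (sphere 0 1) x y"
  proof (rule connected_componentI[of "?N ` closed_segment x w \<union> ?N ` closed_segment y w"])
    show "connected (?N ` closed_segment x w \<union> ?N ` closed_segment y w)"
      using cq[of x] cq[of y] by (intro connected_Un) auto
  qed (use sub[of x] sub[of y] xx yy in auto)
qed

lemma relation_conn:
  assumes W: "open W" "connected (W \<inter> sphere 0 1)" and T: "T \<prec> (UNIV::'a set)"
    and u: "u \<in> W \<inter> sphere 0 1 - span T" and v: "v \<in> W \<inter> sphere 0 1 - span T"
  shows "connected_component (W \<inter> sphere 0 1 - span T) u v"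
proof -
  let ?Y = "W \<inter> sphere 0 1 - span T"
  define R where "R a b \<longleftrightarrow> (\<exists>e>0. \<forall>y z. norm y = 1 \<longrightarrow> norm z = 1 \<longrightarrow> dist y a < e \<longrightarrow> dist z b < e
            \<longrightarrow> y \<notin> span T \<longrightarrow> z \<notin> span T \<longrightarrow> connected_component ?Y y z)" for a b
  have "R u v"
  proof (rule connected_equivalence_relation[OF W(2)])
    show "u \<in> W \<inter> sphere 0 1" "v \<in> W \<inter> sphere 0 1" using u v by auto
  next
    fix x y assume "R x y" then show "R y x"
      unfolding R_def by (metis connected_component_sym)
  next
    fix x y z assume Rxy: "R x y" and Ryz: "R y z" and yS: "y \<in> W \<inter> sphere 0 1"
    obtain e1 where e1: "e1 > 0" "\<forall>p q. norm p = 1 \<longrightarrow> norm q = 1 \<longrightarrow> dist p x < e1 \<longrightarrow> dist q y < e1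
            \<longrightarrow> p \<notin> span T \<longrightarrow> q \<notin> span T \<longrightarrow> connected_component ?Y p q"
      using Rxy unfolding R_def by blast
    obtain e2 where e2: "e2 > 0" "\<forall>p q. norm p = 1 \<longrightarrow> norm q = 1 \<longrightarrow> dist p y < e2 \<longrightarrow> dist q z < e2
            \<longrightarrow> p \<notin> span T \<longrightarrow> q \<notin> span T \<longrightarrow> connected_component ?Y p q"
      using Ryz unfolding R_def by blast
    obtain c where c: "norm c = 1" "c \<notin> span T" "dist c y < min e1 e2"
      using density[of y "min e1 e2" T] yS e1 e2 T by auto
    show "R x z" unfolding R_def
    proof (intro exI[of _ "min e1 e2"] conjI allI impI)
      show "min e1 e2 > 0" using e1 e2 by simp
      fix p q assume "norm p = 1" "norm q = 1" "dist p x < min e1 e2" "dist q z < min e1 e2"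
        "p \<notin> span T" "q \<notin> span T"
      then have "connected_component ?Y p c" "connected_component ?Y c q"
        using e1(2) e2(2) c by auto
      then show "connected_component ?Y p q" by (rule connected_component_trans)
    qed
  next
    fix a assume aS: "a \<in> W \<inter> sphere 0 1"
    obtain \<delta> where \<delta>: "\<delta> > 0" "\<forall>y z. norm y = 1 \<longrightarrow> norm z = 1 \<longrightarrow> dist y a < \<delta> \<longrightarrow> dist z a < \<delta>
            \<longrightarrow> y \<notin> span T \<longrightarrow> z \<notin> span T \<longrightarrow> connected_component ?Y y z"
      using local_conn[of a W T] aS W T by auto
    show "\<exists>T'. openin (top_of_set (W \<inter> sphere 0 1)) T' \<and> a \<in> T' \<and> (\<forall>x\<in>T'. R a x)"
    proof (intro exI[of _ "(W \<inter> sphere 0 1) \<inter> ball a (\<delta>/2)"] conjI ballI)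
      show "openin (top_of_set (W \<inter> sphere 0 1)) ((W \<inter> sphere 0 1) \<inter> ball a (\<delta>/2))"
        by (intro openin_open_Int open_ball)
      show "a \<in> (W \<inter> sphere 0 1) \<inter> ball a (\<delta>/2)" using aS \<delta> by simp
      fix x assume x: "x \<in> (W \<inter> sphere 0 1) \<inter> ball a (\<delta>/2)"
      show "R a x" unfolding R_def
      proof (intro exI[of _ "\<delta>/2"] conjI allI impI)
        show "\<delta>/2 > 0" using \<delta> by simp
        fix p q assume pq: "norm p = 1" "norm q = 1" "dist p a < \<delta>/2" "dist q x < \<delta>/2"
          "p \<notin> span T" "q \<notin> span T"
        have "dist q a \<le> dist q x + dist x a" by (rule dist_triangle)
        then have "dist q a < \<delta>" using pq(4) x by (simp add: dist_commute)
        moreover have "dist p a < \<delta>" using pq(3) \<delta>(1) by simp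
        ultimately show "connected_component ?Y p q" using \<delta>(2) pq(1,2,5,6) by blast
      qed
    qed
  qed
  then obtain e where e: "e > 0" "\<forall>y z. norm y = 1 \<longrightarrow> norm z = 1 \<longrightarrow> dist y u < e \<longrightarrow> dist z v < e
            \<longrightarrow> y \<notin> span T \<longrightarrow> z \<notin> span T \<longrightarrow> connected_component ?Y y z"
    unfolding R_def by blast
  then show ?thesis using u v by auto
qed

end


unbundle cardinal_syntax

lemma lesspoll_iff_ordLess: "A \<prec> B \<longleftrightarrow> |A| <o |B|"
proof -
  have "|A| <o |B| \<longleftrightarrow> \<not> |B| \<le>o |A|"
    using not_ordLeq_iff_ordLess[OF card_of_Well_order card_of_Well_order] by blast
  also have "\<dots> \<longleftrightarrow> \<not> B \<lesssim> A" by (simp add: lepoll_iff_ordLeq)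
  also have "\<dots> \<longleftrightarrow> A \<prec> B"
  proof
    assume nb: "\<not> B \<lesssim> A"
    have "|A| \<le>o |B|" using nb ordLess_or_ordLeq[OF card_of_Well_order card_of_Well_order, of B A]
      by (auto simp: lepoll_iff_ordLeq ordLess_imp_ordLeq)
    then have "A \<lesssim> B" by (simp add: lepoll_iff_ordLeq)
    moreover have "\<not> A \<approx> B" using nb eqpoll_sym eqpoll_imp_lepoll by blast
    ultimately show "A \<prec> B" by (simp add: lesspoll_def)
  next
    assume "A \<prec> B" then show "\<not> B \<lesssim> A"
      using lepoll_antisym lesspoll_def by blast
  qed
  finally show ?thesis by simp
qed

context nvs_big begin

lemma requirement:
  assumes W: "open W" "connected (W \<inter> sphere 0 1)" and UV: "open U" "open V"
    and dis: "U \<inter> V \<inter> W \<inter> sphere 0 1 = {}"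
    and ne: "U \<inter> W \<inter> sphere 0 1 \<noteq> {}" "V \<inter> W \<inter> sphere 0 1 \<noteq> {}"
    and T: "T \<prec> (UNIV::'a set)"
  shows "\<not> (W \<inter> sphere 0 1 - (U \<union> V) \<subseteq> span T)"
proof
  assume sub: "W \<inter> sphere 0 1 - (U \<union> V) \<subseteq> span T"
  have pick: "\<exists>u. u \<in> P \<inter> W \<inter> sphere 0 1 - span T" if P: "open P" "P \<inter> W \<inter> sphere 0 1 \<noteq> {}" for P
  proof -
    obtain u0 where u0: "u0 \<in> P \<inter> W \<inter> sphere 0 1" using P by blast
    have "open (P \<inter> W)" using P W by auto
    then obtain e where e: "e > 0" "ball u0 e \<subseteq> P \<inter> W" using u0 open_contains_ball by blast
    obtain z where z: "norm z = 1" "z \<notin> span T" "dist z u0 < e"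
      using density[of u0 e T] u0 e T by auto
    have "z \<in> ball u0 e" using z by (simp add: dist_commute)
    then show ?thesis using z e by (intro exI[of _ z]) auto
  qed
  obtain u where u: "u \<in> U \<inter> W \<inter> sphere 0 1 - span T" using pick[OF UV(1) ne(1)] by blast
  obtain v where v: "v \<in> V \<inter> W \<inter> sphere 0 1 - span T" using pick[OF UV(2) ne(2)] by blast
  have "connected_component (W \<inter> sphere 0 1 - span T) u v"
    using relation_conn[OF W T] u v by blast
  then obtain C where C: "connected C" "C \<subseteq> W \<inter> sphere 0 1 - span T" "u \<in> C" "v \<in> C"
    unfolding connected_component_def by blast
  have "C \<subseteq> U \<union> V" using C(2) sub by blast
  moreover have "U \<inter> V \<inter> C = {}" using C(2) dis by blast
  ultimately have "U \<inter> C = {} \<or> V \<inter> C = {}" using connectedD[OF C(1) UV] by blast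
  then show False using u v C by blast
qed

lemma transfinite:
  fixes R :: "'r set" and F :: "'r \<Rightarrow> 'a set"
  assumes R: "R \<lesssim> (UNIV::'a set)"
    and F: "\<And>\<rho> T. \<rho> \<in> R \<Longrightarrow> T \<prec> (UNIV::'a set) \<Longrightarrow> \<not> F \<rho> \<subseteq> span T"
  shows "\<exists>A. independent A \<and> A \<subseteq> \<Union>(F ` R) \<and> (\<forall>\<rho>\<in>R. A \<inter> F \<rho> \<noteq> {})"
proof -
  define r where "r = |R|"
  have wo: "wo_rel r" unfolding r_def by (rule Card_order_wo_rel[OF card_of_Card_order])
  have Fr: "Field r = R" unfolding r_def by (rule Field_card_of)
  define H where "H f \<rho> = (SOME p. p \<in> F \<rho> \<and> p \<notin> span (f ` underS r \<rho>))" for f :: "'r \<Rightarrow> 'a" and \<rho>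
  have adm: "wo_rel.adm_wo r H"
    unfolding wo_rel.adm_wo_def[OF wo]
  proof (intro allI impI)
    fix f1 f2 :: "'r \<Rightarrow> 'a" and x
    assume "\<forall>y\<in>underS r x. f1 y = f2 y"
    then have "f1 ` underS r x = f2 ` underS r x" by (intro image_cong) auto
    then show "H f1 x = H f2 x" unfolding H_def by simp
  qed
  define g where "g = wo_rel.worec r H"
  have gH: "g \<rho> = H g \<rho>" for \<rho>
  proof -
    have "g = H g" unfolding g_def by (rule wo_rel.worec_fixpoint[OF wo adm])
    then show ?thesis by (rule fun_cong)
  qed
  have gprop: "g \<rho> \<in> F \<rho> \<and> g \<rho> \<notin> span (g ` underS r \<rho>)" if \<rho>: "\<rho> \<in> R" for \<rho>
  proof -
    have "|underS r \<rho>| <o r" using card_of_underS[OF card_of_Card_order, of \<rho> R] \<rho> Fr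
      by (simp add: r_def)
    then have "underS r \<rho> \<prec> R" by (simp add: lesspoll_iff_ordLess r_def)
    then have "g ` underS r \<rho> \<prec> R" by (rule lesspoll_trans1[OF image_lepoll])
    then have "g ` underS r \<rho> \<prec> (UNIV::'a set)" using R by (rule lesspoll_trans2)
    then have "\<not> F \<rho> \<subseteq> span (g ` underS r \<rho>)" by (rule F[OF \<rho>])
    then have "\<exists>p. p \<in> F \<rho> \<and> p \<notin> span (g ` underS r \<rho>)" by blast
    then have "H g \<rho> \<in> F \<rho> \<and> H g \<rho> \<notin> span (g ` underS r \<rho>)"
      unfolding H_def by (rule someI_ex)
    then show ?thesis using gH by simp
  qed
  have maxex: "\<exists>m\<in>P. \<forall>x\<in>P. (x, m) \<in> r" if "finite P" "P \<noteq> {}" "P \<subseteq> R" for P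
    using that
  proof (induction P rule: finite_ne_induct)
    case (singleton x)
    then have "x \<in> Field r" using Fr by auto
    then have "(x, x) \<in> r" using wo_rel.REFL[OF wo] unfolding refl_on_def by blast
    then show ?case by auto
  next
    case (insert x P)
    then obtain m where m: "m \<in> P" "\<forall>y\<in>P. (y, m) \<in> r" by auto
    have xm: "x \<in> Field r" "m \<in> Field r" using insert m Fr by auto
    have tr: "trans r" using wo_rel.TRANS[OF wo] .
    show ?case
    proof (intro bexI[of _ "wo_rel.max2 r x m"] ballI)
      show "wo_rel.max2 r x m \<in> insert x P" using wo_rel.max2_among[OF wo xm] m by auto
      fix y assume "y \<in> insert x P"
      have g1: "(x, wo_rel.max2 r x m) \<in> r" "(m, wo_rel.max2 r x m) \<in> r"
        using wo_rel.max2_greater[OF wo xm] by auto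
      show "(y, wo_rel.max2 r x m) \<in> r"
      proof (cases "y = x")
        case True then show ?thesis using g1 by simp
      next
        case False
        then have "(y, m) \<in> r" using \<open>y \<in> insert x P\<close> m by auto
        then show ?thesis using g1(2) tr unfolding trans_def by blast
      qed
    qed
  qed
  have indep: "independent (g ` P)" if "finite P" "P \<subseteq> R" for P
    using that
  proof (induction "card P" arbitrary: P rule: less_induct)
    case less
    show ?case
    proof (cases "P = {}")
      case True then show ?thesis using independent_empty by simp
    next
      case False
      obtain m where m: "m \<in> P" "\<forall>x\<in>P. (x, m) \<in> r" using maxex[OF less.prems(1) False less.prems(2)] by blast
      have cl: "card (P - {m}) < card P" by (rule card_Diff1_less[OF less.prems(1) m(1)])
      have ind: "independent (g ` (P - {m}))"
        by (rule less.hyps[OF cl]) (use less.prems in auto)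
      have "P - {m} \<subseteq> underS r m" using m unfolding underS_def by auto
      then have "span (g ` (P - {m})) \<subseteq> span (g ` underS r m)" by (intro span_mono image_mono)
      then have "g m \<notin> span (g ` (P - {m}))" using gprop[of m] m less.prems by auto
      then have "independent (insert (g m) (g ` (P - {m})))" using ind by (rule independent_insertI)
      moreover have "insert (g m) (g ` (P - {m})) = g ` P" using m by auto
      ultimately show ?thesis by simp
    qed
  qed
  have "independent (g ` R)"
  proof
    assume "dependent (g ` R)"
    then obtain t u where t: "finite t" "t \<subseteq> g ` R" "(\<Sum>v\<in>t. scale (u v) v) = 0" "\<exists>v\<in>t. u v \<noteq> 0"
      unfolding dependent_explicit by blast
    have "dependent t" unfolding dependent_explicit using t by blast
    obtain P where P: "P \<subseteq> R" "finite P" "t = g ` P" using finite_subset_image[OF t(1,2)] by blast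
    have "independent (g ` P)" using indep P by blast
    then show False using \<open>dependent t\<close> P by simp
  qed
  moreover have "g ` R \<subseteq> \<Union>(F ` R)" using gprop by blast
  moreover have "\<forall>\<rho>\<in>R. g ` R \<inter> F \<rho> \<noteq> {}" using gprop by blast
  ultimately show ?thesis by blast
qed

end



lemma sep_open:
  fixes P Q :: "'a::real_normed_vector set"
  assumes sep: "separatedin euclidean P Q"
  shows "\<exists>U V. open U \<and> open V \<and> P \<subseteq> U \<and> Q \<subseteq> V \<and> disjnt U V"
proof -
  have "metrizable_space (euclidean :: 'a topology)" by (rule metrizable_space_euclidean)
  from metrizable_space_separation[OF this sep] show ?thesis by simp
qed

context nvs_big begin

lemma main_locale:
  assumes opens: "{U::'a set. open U} \<approx> (UNIV::'a set)"
  shows "\<exists>B. hamel_basis scale B \<and> B \<subseteq> sphere 0 1 \<and> connected B \<and> locally connected B"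
proof -
  define S where "S = sphere (0::'a) 1"
  define Rs where "Rs = {(W,U,V). open W \<and> open U \<and> open V \<and> connected (W \<inter> S) \<and>
      U \<inter> V \<inter> W \<inter> S = {} \<and> U \<inter> W \<inter> S \<noteq> {} \<and> V \<inter> W \<inter> S \<noteq> {}}"
  define F where "F \<rho> = (case \<rho> of (W,U,V) \<Rightarrow> W \<inter> S - (U \<union> V))" for \<rho> :: "'a set \<times> 'a set \<times> 'a set"
  define Op where "Op = {U::'a set. open U}"
  have infO: "infinite Op" using eqpoll_finite_iff[OF opens] infU by (simp add: Op_def)
  have "Rs \<subseteq> Op \<times> (Op \<times> Op)" by (auto simp: Rs_def Op_def)
  then have "Rs \<lesssim> Op \<times> (Op \<times> Op)" by (rule subset_imp_lepoll)
  also have "Op \<times> (Op \<times> Op) \<lesssim> Op \<times> Op"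
    by (rule times_lepoll_mono[OF lepoll_refl times_self_lepoll[OF infO]])
  also have "Op \<times> Op \<lesssim> Op" by (rule times_self_lepoll[OF infO])
  also have "Op \<lesssim> (UNIV::'a set)" using opens by (simp add: Op_def eqpoll_imp_lepoll)
  finally have RsU: "Rs \<lesssim> (UNIV::'a set)" .
  have FR: "\<not> F \<rho> \<subseteq> span T" if "\<rho> \<in> Rs" "T \<prec> (UNIV::'a set)" for \<rho> T
  proof -
    obtain W U V where \<rho>: "\<rho> = (W,U,V)" by (cases \<rho>) auto
    have h: "open W" "connected (W \<inter> sphere 0 1)" "open U" "open V"
      "U \<inter> V \<inter> W \<inter> sphere 0 1 = {}" "U \<inter> W \<inter> sphere 0 1 \<noteq> {}" "V \<inter> W \<inter> sphere 0 1 \<noteq> {}"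
      using that(1) by (auto simp: Rs_def \<rho> S_def)
    show ?thesis using requirement[OF h that(2)] by (simp add: F_def \<rho> S_def)
  qed
  obtain A where A: "independent A" "A \<subseteq> \<Union>(F ` Rs)" "\<forall>\<rho>\<in>Rs. A \<inter> F \<rho> \<noteq> {}"
    using transfinite[of Rs F, OF RsU FR] by blast
  have AS: "A \<subseteq> S" using A(2) by (auto simp: F_def split: prod.splits)
  obtain B where B: "A \<subseteq> B" "B \<subseteq> S" "independent B" "S \<subseteq> span B"
    using maximal_independent_subset_extend[OF AS A(1)] by blast
  have spanB: "span B = UNIV"
  proof (intro set_eqI iffI)
    fix x :: 'a
    show "x \<in> span B"
    proof (cases "x = 0")
      case True then show ?thesis using span_zero by simp
    next
      case False
      then have "x /\<^sub>R norm x \<in> S" by (simp add: S_def)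
      then have "x /\<^sub>R norm x \<in> span B" using B(4) by blast
      then have "norm x *\<^sub>R (x /\<^sub>R norm x) \<in> span B" by (rule span_scaleR)
      then show ?thesis using False by simp
    qed
  qed simp
  have meets: "B \<inter> F \<rho> \<noteq> {}" if "\<rho> \<in> Rs" for \<rho> using A(3) B(1) that by blast
  have G: "connected (W \<inter> B)" if W: "open W" "connected (W \<inter> S)" for W
  proof (rule ccontr)
    assume "\<not> connected (W \<inter> B)"
    then have "\<exists>e1 e2. open e1 \<and> open e2 \<and> W \<inter> B \<subseteq> e1 \<union> e2 \<and> e1 \<inter> e2 \<inter> (W \<inter> B) = {} \<and>
      e1 \<inter> (W \<inter> B) \<noteq> {} \<and> e2 \<inter> (W \<inter> B) \<noteq> {}"
      unfolding connected_def by (rule notnotD)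
    then obtain e1 e2 where e: "open e1" "open e2" "W \<inter> B \<subseteq> e1 \<union> e2" "e1 \<inter> e2 \<inter> (W \<inter> B) = {}"
      "e1 \<inter> (W \<inter> B) \<noteq> {}" "e2 \<inter> (W \<inter> B) \<noteq> {}"
      by (elim exE conjE) (rule that)
    define P where "P = e1 \<inter> (W \<inter> B)"
    define Q where "Q = e2 \<inter> (W \<inter> B)"
    have "e1 \<inter> Q = {}" using e(4) unfolding Q_def by (simp add: Int_assoc)
    then have "e1 \<inter> closure Q = {}" by (simp only: open_Int_closure_eq_empty[OF e(1)])
    then have PQ: "P \<inter> closure Q = {}" unfolding P_def by blast
    have "e2 \<inter> P = {}" using e(4) unfolding P_def by (simp add: Int_assoc Int_left_commute)
    then have "e2 \<inter> closure P = {}" by (simp only: open_Int_closure_eq_empty[OF e(2)])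
    then have QP: "Q \<inter> closure P = {}" unfolding Q_def by blast
    have sep: "separatedin euclidean P Q"
      unfolding separatedin_def topspace_euclidean euclidean_closure_of using PQ QP by simp
    obtain U V where oUV: "open U" "open V" and UV3: "P \<subseteq> U" "Q \<subseteq> V" "disjnt U V"
      using sep_open[OF sep] by blast
    have d1: "U \<inter> V \<inter> W \<inter> S = {}" using UV3(3) by (auto simp: disjnt_def)
    have PS: "P \<subseteq> W \<inter> S" "Q \<subseteq> W \<inter> S" using B(2) by (auto simp: P_def Q_def)
    have d2: "U \<inter> W \<inter> S \<noteq> {}" using PS(1) UV3(1) e(5) unfolding P_def by blast
    have d3: "V \<inter> W \<inter> S \<noteq> {}" using PS(2) UV3(2) e(6) unfolding Q_def by blast
    have "(W, U, V) \<in> Rs"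
      unfolding Rs_def using W oUV d1 d2 d3 by simp
    then have "B \<inter> F (W, U, V) \<noteq> {}" by (rule meets)
    then obtain b where b: "b \<in> B" "b \<in> W" "b \<notin> U" "b \<notin> V" by (auto simp: F_def)
    then have "b \<in> e1 \<or> b \<in> e2" using e(3) by blast
    then have "b \<in> P \<or> b \<in> Q" using b(1,2) unfolding P_def Q_def by blast
    then show False using b(3,4) UV3(1,2) by blast
  qed
  have conB: "connected B"
    using G[of UNIV] sphere_connected by (simp add: S_def)
  have lcB: "locally connected B"
    unfolding locally_connected
  proof (intro allI impI)
    fix v x assume vx: "openin (top_of_set B) v \<and> x \<in> v"
    then obtain O' where O': "open O'" "v = B \<inter> O'" using openin_open by blast
    have xS: "x \<in> S" "x \<in> O'" using vx O' B(2) by auto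
    define C where "C = connected_component_set (O' \<inter> S) x"
    have CS: "C \<subseteq> O' \<inter> S" unfolding C_def by (rule connected_component_subset)
    have xC: "x \<in> C" using xS by (simp add: C_def)
    have "openin (top_of_set S) C"
      unfolding openin_euclidean_subtopology_iff
    proof (intro conjI ballI)
      show "C \<subseteq> S" using CS by blast
      fix y assume yC: "y \<in> C"
      then have yS: "y \<in> O' \<inter> S" using CS by blast
      have T0: "({}::'a set) \<prec> (UNIV::'a set)" by (rule finite_lesspoll_infinite[OF infU]) simp
      have yS': "norm y = 1" "y \<in> O'" using yS by (auto simp: S_def)
      obtain \<delta> where \<delta>: "\<delta> > 0" "\<forall>y' z. norm y' = 1 \<longrightarrow> norm z = 1 \<longrightarrow> dist y' y < \<delta> \<longrightarrow> dist z y < \<delta>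
            \<longrightarrow> y' \<notin> span {} \<longrightarrow> z \<notin> span {} \<longrightarrow> connected_component (O' \<inter> sphere 0 1 - span {}) y' z"
        using local_conn[OF yS'(1) O'(1) yS'(2) T0] by blast
      show "\<exists>e>0. \<forall>x'\<in>S. dist x' y < e \<longrightarrow> x' \<in> C"
      proof (intro exI[of _ \<delta>] conjI ballI impI \<delta>(1))
        fix z assume z: "z \<in> S" "dist z y < \<delta>"
        have eqs: "O' \<inter> sphere 0 1 - span {} = O' \<inter> S" by (auto simp: S_def)
        have z1: "norm z = 1" using z(1) by (simp add: S_def)
        have ns: "y \<notin> span {}" "z \<notin> span {}" using yS'(1) z1 by auto
        have "connected_component (O' \<inter> sphere 0 1 - span {}) y z"
          using \<delta>(2) yS'(1) z1 z(2) \<delta>(1) ns by simp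
        then have "connected_component (O' \<inter> S) y z" by (simp only: eqs)
        moreover have "connected_component (O' \<inter> S) x y" using yC by (simp add: C_def)
        ultimately show "z \<in> C" unfolding C_def using connected_component_trans by blast
      qed
    qed
    then obtain W0 where W0: "open W0" "C = S \<inter> W0" using openin_open by blast
    define W where "W = W0 \<inter> O'"
    have WS: "W \<inter> S = C" using W0 CS by (auto simp: W_def)
    have oW: "open W" unfolding W_def using W0(1) O'(1) by (rule open_Int)
    have cW: "connected (W \<inter> S)" unfolding WS C_def by simp
    show "\<exists>u. openin (top_of_set B) u \<and> connected u \<and> x \<in> u \<and> u \<subseteq> v"
    proof (intro exI[of _ "B \<inter> W"] conjI)
      show "openin (top_of_set B) (B \<inter> W)" using oW by (rule openin_open_Int)
      show "connected (B \<inter> W)" using G[OF oW cW] by (simp add: Int_commute)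
      show "x \<in> B \<inter> W" using vx O' xC W0 xS by (auto simp: W_def)
      show "B \<inter> W \<subseteq> v" using O' by (auto simp: W_def)
    qed
  qed
  have "hamel_basis scale B" unfolding hamel_basis_def using B(3) spanB by simp
  then show ?thesis using B(2) conB lcB by (auto simp: S_def)
qed

end



lemma nvs_real: "nvs (scaleR :: real \<Rightarrow> 'a::real_normed_vector \<Rightarrow> 'a)"
proof (rule nvs.intro)
  show "vector_space (scaleR :: real \<Rightarrow> 'a \<Rightarrow> 'a)" by (rule real_vector.vector_space_axioms)
  show "nvs_axioms (scaleR :: real \<Rightarrow> 'a \<Rightarrow> 'a)" unfolding nvs_axioms_def by simp
qed

lemma nvs_complex:
  assumes "complex_normed_scaling (scl :: complex \<Rightarrow> 'a::real_normed_vector \<Rightarrow> 'a)"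
  shows "nvs scl"
proof (rule nvs.intro)
  show "vector_space scl" using assms unfolding complex_normed_scaling_def by blast
  show "nvs_axioms scl" unfolding nvs_axioms_def using assms unfolding complex_normed_scaling_def by blast
qed

lemma generic:
  assumes N: "nvs scl" and inf: "infinite_dimensional scl"
    and op: "{U::'a set. open U} \<approx> (UNIV :: 'a set)"
    and hb: "\<exists>B. hamel_basis scl B \<and> B \<approx> (UNIV :: 'a set)"
  shows "\<exists>B. hamel_basis (scl :: 'k::real_field \<Rightarrow> 'a::real_normed_vector \<Rightarrow> 'a) B \<and> B \<subseteq> sphere 0 1 \<and>
                connected B \<and> locally connected B"
proof -
  obtain B0 where B0: "hamel_basis scl B0" "B0 \<approx> (UNIV :: 'a set)" using hb by blast
  have "nvs_big scl B0"
  proof (rule nvs_big.intro[OF N])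
    show "nvs_big_axioms scl B0" unfolding nvs_big_axioms_def
      using inf B0 unfolding hamel_basis_def by blast
  qed
  then show ?thesis using nvs_big.main_locale op by blast
qed

theorem theorem1:
  fixes dummy :: "'a::real_normed_vector"
  shows
    "(infinite_dimensional (scaleR :: real \<Rightarrow> 'a \<Rightarrow> 'a) \<and>
      {U::'a set. open U} \<approx> (UNIV :: 'a set) \<and>
      (\<exists>B. hamel_basis (scaleR :: real \<Rightarrow> 'a \<Rightarrow> 'a) B \<and> B \<approx> (UNIV :: 'a set))
      \<longrightarrow> (\<exists>B. hamel_basis (scaleR :: real \<Rightarrow> 'a \<Rightarrow> 'a) B \<and> B \<subseteq> sphere 0 1 \<and>
                connected B \<and> locally connected B))
     \<and>
     (\<forall>scl :: complex \<Rightarrow> 'a \<Rightarrow> 'a.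
      complex_normed_scaling scl \<and>
      infinite_dimensional scl \<and>
      {U::'a set. open U} \<approx> (UNIV :: 'a set) \<and>
      (\<exists>B. hamel_basis scl B \<and> B \<approx> (UNIV :: 'a set))
      \<longrightarrow> (\<exists>B. hamel_basis scl B \<and> B \<subseteq> sphere 0 1 \<and>
                connected B \<and> locally connected B))"
proof (intro conjI impI allI)
  assume h: "infinite_dimensional (scaleR :: real \<Rightarrow> 'a \<Rightarrow> 'a) \<and>
      {U::'a set. open U} \<approx> (UNIV :: 'a set) \<and>
      (\<exists>B. hamel_basis (scaleR :: real \<Rightarrow> 'a \<Rightarrow> 'a) B \<and> B \<approx> (UNIV :: 'a set))"
  show "\<exists>B. hamel_basis (scaleR :: real \<Rightarrow> 'a \<Rightarrow> 'a) B \<and> B \<subseteq> sphere 0 1 \<and>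
                connected B \<and> locally connected B"
    using generic[OF nvs_real] h by blast
next
  fix scl :: "complex \<Rightarrow> 'a \<Rightarrow> 'a"
  assume h: "complex_normed_scaling scl \<and>
      infinite_dimensional scl \<and>
      {U::'a set. open U} \<approx> (UNIV :: 'a set) \<and>
      (\<exists>B. hamel_basis scl B \<and> B \<approx> (UNIV :: 'a set))"
  show "\<exists>B. hamel_basis scl B \<and> B \<subseteq> sphere 0 1 \<and> connected B \<and> locally connected B"
    using generic[OF nvs_complex] h by blast
qed


end
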